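(* Let $q$ be a prime power, $n\ge 2$ and $1\le i\le n$. Every root of $s_{n,i}(t)$ in an algebraic closure of $\mathbb{F}_q$ lies in $\mathbb{F}_{q^k}$ for some integer $k$ with $n-i+1\le k\le n$.
   Context: For a prime power $q$ and integers $n\ge 1$, $0\le i\le n$, the $i$-th $(n,q)$-elementary symmetric polynomial is $s_{n,i}(t)=\sum_{0\le j_1<j_2<\dots<j_i\le n-1} t^{q^{j_1}+q^{j_2}+\dots+q^{j_i}}\in\mathbb{F}_p[t]$ (where $p$ is the characteristic of $\mathbb{F}_q$). By convention $s_{n,0}(t)=1$. *)

theory Defs
  imports "HOL-Computational_Algebra.Polynomial" "HOL-Computational_Algebra.Primes"
begin

definition qsym_poly :: "nat \<Rightarrow> nat \<Rightarrow> nat \<Rightarrow> 'a::comm_ring_1 poly" where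
  "qsym_poly q n i = (\<Sum>J\<in>{J. J \<subseteq> {0..<n} \<and> card J = i}. monom 1 (\<Sum>j\<in>J. q ^ j))"

definition alg_closed :: "'a::field itself \<Rightarrow> bool" where
  "alg_closed _ \<longleftrightarrow> (\<forall>f :: 'a poly. degree f > 0 \<longrightarrow> (\<exists>x. poly f x = 0))"

end

theory Submission
  imports Defs
begin

lemma frob_add_p:
  fixes a b :: "'a::comm_ring_1"
  assumes "prime p" "CHAR('a) = p"
  shows "(a + b) ^ p = a ^ p + b ^ p"
proof -
  have "(a + b) ^ p = (\<Sum>k\<le>p. of_nat (p choose k) * a ^ k * b ^ (p - k))"
    by (simp add: binomial_ring)
  also have "\<dots> = (\<Sum>k\<in>{0,p}. of_nat (p choose k) * a ^ k * b ^ (p - k))"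
  proof (rule sum.mono_neutral_right)
    show "finite {..p}" by simp
    show "{0, p} \<subseteq> {..p}" by auto
    show "\<forall>k\<in>{..p} - {0, p}. of_nat (p choose k) * a ^ k * b ^ (p - k) = (0::'a)"
    proof
      fix k assume k: "k \<in> {..p} - {0, p}"
      have "p dvd (p choose k)"
        using k assms(1) by (intro dvd_choose_prime) (auto dest: prime_gt_0_nat)
      then have "of_nat (p choose k) = (0::'a)"
        using assms(2) by (simp add: of_nat_eq_0_iff_char_dvd)
      then show "of_nat (p choose k) * a ^ k * b ^ (p - k) = (0::'a)" by simp
    qed
  qed
  also have "\<dots> = a ^ p + b ^ p"
    using assms(1) by (simp add: prime_gt_0_nat)
  finally show ?thesis .
qed

lemma frob_add:
  fixes a b :: "'a::comm_ring_1"
  assumes "prime p" "CHAR('a) = p"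
  shows "(a + b) ^ (p ^ m) = a ^ (p ^ m) + b ^ (p ^ m)"
proof (induction m)
  case 0 then show ?case by simp
next
  case (Suc m)
  have "(a + b) ^ (p ^ Suc m) = ((a + b) ^ (p ^ m)) ^ p"
    by (simp add: power_mult[symmetric] mult.commute)
  also have "\<dots> = (a ^ (p ^ m)) ^ p + (b ^ (p ^ m)) ^ p"
    using Suc frob_add_p[OF assms] by simp
  also have "\<dots> = a ^ (p ^ Suc m) + b ^ (p ^ Suc m)"
    by (simp add: power_mult[symmetric] mult.commute)
  finally show ?case .
qed

lemma frob_sum:
  fixes f :: "'b \<Rightarrow> 'a::comm_ring_1"
  assumes "prime p" "CHAR('a) = p"
  shows "(sum f A) ^ (p ^ m) = (\<Sum>x\<in>A. f x ^ (p ^ m))"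
proof -
  have pm: "p ^ m > 0" using assms(1) by (simp add: prime_gt_0_nat)
  show ?thesis
  proof (cases "finite A")
    case True
    then show ?thesis
      by (induction A rule: finite_induct)
         (simp_all add: frob_add[OF assms] zero_power[OF pm])
  next
    case False
    then show ?thesis using zero_power[OF pm, where ?'a='a] by simp
  qed
qed

definition es :: "nat \<Rightarrow> nat set \<Rightarrow> nat \<Rightarrow> 'a::comm_ring_1 \<Rightarrow> 'a" where
  "es q A i y = (\<Sum>J\<in>{J. J \<subseteq> A \<and> card J = i}. y ^ (\<Sum>j\<in>J. q ^ j))"

lemma poly_qsym: "poly (qsym_poly q n i) y = es q {0..<n} i y"
  by (simp add: qsym_poly_def es_def poly_sum poly_monom)

lemma es_0:
  assumes "finite A"
  shows "es q A 0 y = 1"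
proof -
  have "{J. J \<subseteq> A \<and> card J = 0} = {{}}"
    using assms by (auto dest: finite_subset)
  then show ?thesis by (simp add: es_def)
qed

lemma es_insert:
  assumes "finite A" "a \<notin> A"
  shows "es q (insert a A) (Suc i) y = es q A (Suc i) y + y ^ (q ^ a) * es q A i y"
proof -
  let ?P = "\<lambda>k. {J. J \<subseteq> A \<and> card J = k}"
  let ?Q = "{J. J \<subseteq> insert a A \<and> card J = Suc i}"
  let ?g = "\<lambda>J. y ^ (\<Sum>j\<in>J. q ^ j)"
  have fin: "finite (Pow (insert a A))" using assms by simp
  have inj: "inj_on (insert a) (?P i)"
    unfolding inj_on_def using assms(2)
    by (metis (no_types, lifting) Diff_insert_absorb mem_Collect_eq subsetD)
  have eq1: "{J\<in>?Q. a \<in> J} = insert a ` ?P i"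
  proof (rule set_eqI)
    fix K
    show "K \<in> {J\<in>?Q. a \<in> J} \<longleftrightarrow> K \<in> insert a ` ?P i"
    proof
      assume K: "K \<in> {J\<in>?Q. a \<in> J}"
      then have fK: "finite K" using assms(1) by (auto intro: finite_subset)
      have "K = insert a (K - {a})" using K by auto
      moreover have "K - {a} \<in> ?P i" using K fK by (auto simp: card_Diff_singleton)
      ultimately show "K \<in> insert a ` ?P i" by blast
    next
      assume "K \<in> insert a ` ?P i"
      then obtain L where L: "L \<subseteq> A" "card L = i" "K = insert a L" by auto
      then have "finite L" using assms(1) by (auto intro: finite_subset)
      moreover have "a \<notin> L" using L assms(2) by blast
      ultimately show "K \<in> {J\<in>?Q. a \<in> J}" using L by auto
    qed
  qed
  have eq2: "{J\<in>?Q. a \<notin> J} = ?P (Suc i)" using assms(2) by auto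
  have "?Q = {J\<in>?Q. a \<in> J} \<union> {J\<in>?Q. a \<notin> J}" by auto
  then have "es q (insert a A) (Suc i) y = sum ?g ({J\<in>?Q. a \<in> J} \<union> {J\<in>?Q. a \<notin> J})"
    unfolding es_def by (rule arg_cong[where f="sum ?g"])
  also have "\<dots> = sum ?g {J\<in>?Q. a \<in> J} + sum ?g {J\<in>?Q. a \<notin> J}"
  proof (rule sum.union_disjoint)
    show "finite {J\<in>?Q. a \<in> J}" by (rule finite_subset[OF _ fin]) blast
    show "finite {J\<in>?Q. a \<notin> J}" by (rule finite_subset[OF _ fin]) blast
  qed blast
  also have "sum ?g {J\<in>?Q. a \<notin> J} = es q A (Suc i) y"
    by (simp only: eq2 es_def)
  also have "sum ?g {J\<in>?Q. a \<in> J} = sum (?g \<circ> insert a) (?P i)"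
    by (simp only: eq1 sum.reindex[OF inj])
  also have "\<dots> = sum (\<lambda>J. y ^ (q ^ a) * ?g J) (?P i)"
  proof (rule sum.cong)
    fix J assume "J \<in> ?P i"
    then have "finite J" "a \<notin> J" using assms by (auto intro: finite_subset)
    then show "(?g \<circ> insert a) J = y ^ (q ^ a) * ?g J"
      by (simp add: power_add)
  qed simp
  also have "\<dots> = y ^ (q ^ a) * es q A i y"
    by (simp add: es_def sum_distrib_left)
  finally show ?thesis by (simp add: add.commute)
qed

lemma es_shift:
  "es q (Suc ` A) i y = es q A i (y ^ q)"
proof -
  have inj: "inj_on (image Suc) (Pow A)" by (rule inj_onI) (simp add: inj_image_eq_iff)
  have inj2: "inj_on (image Suc) {J. J \<subseteq> A \<and> card J = i}"
    by (rule inj_on_subset[OF inj]) auto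
  have seteq: "{J. J \<subseteq> Suc ` A \<and> card J = i} = image Suc ` {J. J \<subseteq> A \<and> card J = i}"
  proof (rule set_eqI)
    fix K
    show "K \<in> {J. J \<subseteq> Suc ` A \<and> card J = i} \<longleftrightarrow> K \<in> image Suc ` {J. J \<subseteq> A \<and> card J = i}"
    proof
      assume K: "K \<in> {J. J \<subseteq> Suc ` A \<and> card J = i}"
      then obtain L where L: "L \<subseteq> A" "K = Suc ` L" by (auto elim!: subset_imageE)
      then have "card L = i" using K by (simp add: card_image)
      then show "K \<in> image Suc ` {J. J \<subseteq> A \<and> card J = i}" using L by auto
    next
      assume "K \<in> image Suc ` {J. J \<subseteq> A \<and> card J = i}"
      then show "K \<in> {J. J \<subseteq> Suc ` A \<and> card J = i}" by (auto simp: card_image)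
    qed
  qed
  have "es q (Suc ` A) i y = (\<Sum>J\<in>{J. J \<subseteq> A \<and> card J = i}. y ^ (\<Sum>j\<in>Suc ` J. q ^ j))"
    unfolding es_def seteq by (simp add: sum.reindex[OF inj2])
  also have "\<dots> = es q A i (y ^ q)"
    unfolding es_def
    by (rule sum.cong) (simp_all add: sum.reindex sum_distrib_left[symmetric] power_mult)
  finally show ?thesis .
qed

lemma es_frob:
  fixes y :: "'a::comm_ring_1"
  assumes "prime p" "CHAR('a) = p"
  shows "es (p ^ m) A i (y ^ (p ^ m)) = (es (p ^ m) A i y) ^ (p ^ m)"
  unfolding es_def frob_sum[OF assms]
  by (simp add: power_mult[symmetric] mult.commute)

lemma main:
  fixes y :: "'a::field"
  assumes "prime p" "CHAR('a) = p" "q = p ^ m"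
  shows "i \<le> n \<Longrightarrow> es q {0..<n} i y = 0 \<Longrightarrow> \<exists>k. n - i + 1 \<le> k \<and> k \<le> n \<and> y ^ (q ^ k) = y"
proof (induction i arbitrary: n y)
  case 0
  then show ?case by (simp add: es_0)
next
  case (Suc i)
  then obtain n' where n: "n = Suc n'" and i: "i \<le> n'" by (cases n) auto
  let ?M = "Suc ` {0..<n'}"
  have qpos: "q > 0" using assms by (simp add: prime_gt_0_nat)
  have A1: "{0..<n} = insert 0 ?M" unfolding n
    by (auto simp: image_iff)
  have A2: "Suc ` {0..<n} = insert n ?M" unfolding n by auto
  have e1: "es q ?M (Suc i) y + y * es q ?M i y = 0"
    using Suc.prems(2) unfolding A1 by (subst (asm) es_insert) auto
  have fr: "\<And>A j. es q A j (y ^ q) = (es q A j y) ^ q"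
    using es_frob[OF assms(1,2)] assms(3) by simp
  have "es q (Suc ` {0..<n}) (Suc i) y = es q {0..<n} (Suc i) (y ^ q)" by (rule es_shift)
  also have "\<dots> = (es q {0..<n} (Suc i) y) ^ q" by (rule fr)
  also have "\<dots> = 0" using Suc.prems(2) qpos by simp
  finally have "es q (insert n ?M) (Suc i) y = 0" unfolding A2 .
  then have e2: "es q ?M (Suc i) y + y ^ (q ^ n) * es q ?M i y = 0"
    by (subst (asm) es_insert) (auto simp: n)
  have "(y ^ (q ^ n) - y) * es q ?M i y = (es q ?M (Suc i) y + y ^ (q ^ n) * es q ?M i y)
      - (es q ?M (Suc i) y + y * es q ?M i y)" by (simp only: algebra_simps)
  also have "\<dots> = 0" by (simp only: e1 e2 diff_self)
  finally have "(y ^ (q ^ n) - y) * es q ?M i y = 0" .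
  then consider "y ^ (q ^ n) = y" | "es q ?M i y = 0" by auto
  then show ?case
  proof cases
    case 1 then show ?thesis using n by (intro exI[of _ n]) auto
  next
    case 2
    then have "es q {0..<n'} i y ^ q = 0"
      using fr[of "{0..<n'}" i] es_shift[of q "{0..<n'}" i y] by simp
    then have "es q {0..<n'} i y = 0" using qpos by simp
    from Suc.IH[OF i this] obtain k where "n' - i + 1 \<le> k" "k \<le> n'" "y ^ (q ^ k) = y" by blast
    then show ?thesis using n by (intro exI[of _ k]) auto
  qed
qed

theorem lemma3p9:
  fixes p m q n i :: nat and x :: "'a::field"
  assumes "prime p" and "m \<ge> 1" and "q = p ^ m"
    and "CHAR('a) = p"
    and "alg_closed TYPE('a)"
    and "n \<ge> 2" and "1 \<le> i" and "i \<le> n"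
    and "poly (qsym_poly q n i) x = 0"
  shows "\<exists>k::nat. n - i + 1 \<le> k \<and> k \<le> n \<and> x ^ (q ^ k) = x"
  using main[OF assms(1,4,3) assms(8)] assms(9) by (simp add: poly_qsym)

end
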